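(* For every integer $d\ge2$, the degree map $\deg:[\mathbf{P}^1,\mathbf{P}^d]^{\mathrm{N}}\to\mathbf{N}$ is a bijection.
   Context: Let $k$ be a field and $d\ge2$. For $n\ge0$ and a $k$-algebra $R$, $\mathcal{F}^d_n(R)$ is the set of pairs $(A,B)$ where $A\in R[X]$ is monic of degree $n$ and $B=(B_1,\dots,B_d)$ is a $d$-tuple of polynomials of degree $<n$ such that $A,B_1,\dots,B_d$ generate the unit ideal of $R[X]$. Pointed scheme morphisms $\mathbf{P}^1_k\to\mathbf{P}^d_k$ (base points $\infty=[1:0]$ and $[1:0:\dots:0]$) correspond to pairs ($n$, element of $\mathcal{F}^d_n(k)$), $n$ being the degree; pointed naive homotopies $\mathbf{P}^1\times\mathbf{A}^1\to\mathbf{P}^d$ correspond to elements of $\mathcal{F}^d_n(k[T])$, with source and target obtained by evaluating at $T=0$ and $T=1$. $[\mathbf{P}^1,\mathbf{P}^d]^{\mathrm{N}}$ is the set of pointed morphisms modulo the equivalence relation generated by pointed naive homotopies. *)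

theory Defs
  imports "HOL-Computational_Algebra.Polynomial"
begin

definition gen_unit_ideal :: "'b::comm_ring_1 poly \<Rightarrow> 'b poly list \<Rightarrow> bool" where
  "gen_unit_ideal A B \<longleftrightarrow>
     (\<exists>U V. length V = length B \<and> U * A + (\<Sum>i<length B. V ! i * B ! i) = 1)"

text \<open>F^d_n(R): A monic of degree n, B a d-tuple of polynomials of degree < n
  (for n = 0 this forces B_i = 0), generating the unit ideal.\<close>
definition F_dn :: "nat \<Rightarrow> nat \<Rightarrow> ('b::comm_ring_1 poly \<times> 'b poly list) set" where
  "F_dn d n = {(A, B). degree A = n \<and> lead_coeff A = 1 \<and> length B = d \<and>
      (\<forall>b\<in>set B. b = 0 \<or> degree b < n) \<and> gen_unit_ideal A B}"

text \<open>Pointed morphisms P^1 -> P^d over k: pairs (degree n, element of F^d_n(k)).\<close>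
definition pointed_morphisms :: "nat \<Rightarrow> (nat \<times> ('a::field poly \<times> 'a poly list)) set" where
  "pointed_morphisms d = {(n, AB). AB \<in> F_dn d n}"

text \<open>k[T][X] is modelled as  a poly poly (outer variable X, coefficients in k[T]);
  evaluation at T = t.\<close>
definition eval_T :: "'a::comm_ring_1 \<Rightarrow> 'a poly poly \<Rightarrow> 'a poly" where
  "eval_T t P = map_poly (\<lambda>c. poly c t) P"

definition eval_pair :: "'a::comm_ring_1 \<Rightarrow> 'a poly poly \<times> 'a poly poly list \<Rightarrow> 'a poly \<times> 'a poly list" where
  "eval_pair t h = (eval_T t (fst h), map (eval_T t) (snd h))"

definition naive_htpy :: "nat \<Rightarrow> nat \<times> ('a::field poly \<times> 'a poly list) \<Rightarrow> nat \<times> ('a poly \<times> 'a poly list) \<Rightarrow> bool" where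
  "naive_htpy d x y \<longleftrightarrow>
     (\<exists>n h. h \<in> F_dn d n \<and> x = (n, eval_pair 0 h) \<and> y = (n, eval_pair 1 h))"

definition naive_rel :: "nat \<Rightarrow> ((nat \<times> ('a::field poly \<times> 'a poly list)) \<times> (nat \<times> ('a poly \<times> 'a poly list))) set" where
  "naive_rel d = {(x, y). x \<in> pointed_morphisms d \<and> y \<in> pointed_morphisms d \<and> equivclp (naive_htpy d) x y}"

definition naive_classes :: "nat \<Rightarrow> (nat \<times> ('a::field poly \<times> 'a poly list)) set set" where
  "naive_classes d = pointed_morphisms d // naive_rel d"

definition deg_class :: "(nat \<times> ('a poly \<times> 'a poly list)) set \<Rightarrow> nat" where
  "deg_class C = the_elem (fst ` C)"

end

theory Submission
  imports Defs
begin

lemma eqc_step: "r x y \<Longrightarrow> equivclp r x y"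
  by (simp add: equivclp_def symclp_def r_into_rtranclp)
lemma eqc_refl: "equivclp r x x"
  by (simp add: equivclp_def)
lemma eqc_trans: "equivclp r x y \<Longrightarrow> equivclp r y z \<Longrightarrow> equivclp r x z"
  by (meson transpD transp_equivclp)

lemma map_poly_hom_add:
  assumes "f 0 = 0" "\<And>a b. f (a+b) = f a + f b"
  shows "map_poly f (p+q) = map_poly f p + map_poly f q"
  by (intro poly_eqI) (simp add: coeff_map_poly assms)

lemma map_poly_hom_diff:
  assumes "f 0 = 0" "\<And>a b. f (a-b) = f a - f b"
  shows "map_poly f (p-q) = map_poly f p - map_poly f q"
  by (intro poly_eqI) (simp add: coeff_map_poly assms)

lemma map_poly_hom_mult:
  fixes f :: "'a::comm_ring_1 \<Rightarrow> 'b::comm_ring_1"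
  assumes f0: "f 0 = 0" and fa: "\<And>a b. f (a+b) = f a + f b" and fm: "\<And>a b. f (a*b) = f a * f b"
  shows "map_poly f (p*q) = map_poly f p * map_poly f q"
proof (induction p)
  case 0 then show ?case by simp
next
  case (pCons a p)
  have "map_poly f (pCons a p * q) = map_poly f (smult a q + pCons 0 (p*q))" by simp
  also have "\<dots> = smult (f a) (map_poly f q) + pCons 0 (map_poly f p * map_poly f q)"
    by (simp add: map_poly_hom_add[OF f0 fa] map_poly_smult[of f, OF f0 fm] map_poly_pCons[of f, OF f0] f0 pCons.IH)
  also have "\<dots> = map_poly f (pCons a p) * map_poly f q"
    by (simp add: map_poly_pCons[of f, OF f0])
  finally show ?case .
qed

lemma map_poly_hom_sum:
  assumes "f 0 = 0" "\<And>a b. f (a+b) = f a + f b"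
  shows "map_poly f (\<Sum>i\<in>S. g i) = (\<Sum>i\<in>S. map_poly f (g i))"
proof (cases "finite S")
  case True then show ?thesis
    by (induction S rule: finite_induct) (simp_all add: map_poly_hom_add[OF assms])
qed simp

definition lft :: "'a::comm_ring_1 poly \<Rightarrow> 'a poly poly" where
  "lft p = map_poly (\<lambda>c. [:c:]) p"

lemma lft_add: "lft (p+q) = lft p + lft q"
  unfolding lft_def by (rule map_poly_hom_add) simp_all
lemma lft_diff: "lft (p-q) = lft p - lft q"
  unfolding lft_def by (rule map_poly_hom_diff) simp_all
lemma lft_mult: "lft (p*q) = lft p * lft q"
  unfolding lft_def by (rule map_poly_hom_mult) simp_all
lemma lft_sum: "lft (\<Sum>i\<in>S. g i) = (\<Sum>i\<in>S. lft (g i))"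
  unfolding lft_def by (rule map_poly_hom_sum) simp_all
lemma lft_1: "lft 1 = 1"
  unfolding lft_def by simp
lemma lft_0: "lft 0 = 0"
  unfolding lft_def by simp
lemma coeff_lft: "coeff (lft p) k = [:coeff p k:]"
  unfolding lft_def by (simp add: coeff_map_poly)
lemma degree_lft: "degree (lft p) = degree p"
  unfolding lft_def by (rule degree_map_poly) simp
lemma lft_eq_0: "lft p = 0 \<longleftrightarrow> p = 0"
  by (metis coeff_lft lft_0 pCons_eq_0_iff poly_eqI coeff_0)

lemma evT_add: "eval_T t (p+q) = eval_T t p + eval_T t q"
  unfolding eval_T_def by (rule map_poly_hom_add) simp_all
lemma evT_diff: "eval_T t (p-q) = eval_T t p - eval_T t q"
  unfolding eval_T_def by (rule map_poly_hom_diff) simp_all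
lemma evT_mult: "eval_T t (p*q) = eval_T t p * eval_T t q"
  unfolding eval_T_def by (rule map_poly_hom_mult) simp_all
lemma evT_sum: "eval_T t (\<Sum>i\<in>S. g i) = (\<Sum>i\<in>S. eval_T t (g i))"
  unfolding eval_T_def by (rule map_poly_hom_sum) simp_all
lemma evT_1: "eval_T t 1 = 1"
  unfolding eval_T_def by simp
lemma coeff_evT: "coeff (eval_T t p) k = poly (coeff p k) t"
  unfolding eval_T_def by (simp add: coeff_map_poly)
lemma evT_lft: "eval_T t (lft p) = p"
  by (rule poly_eqI) (simp add: coeff_evT coeff_lft)

definition Tc :: "'a::comm_ring_1 poly poly" where "Tc = [:[:0,1:]:]"
definition lin :: "'a::comm_ring_1 poly \<Rightarrow> 'a poly \<Rightarrow> 'a poly poly" where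
  "lin p q = lft p + Tc * lft q"

lemma coeff_lin: "coeff (lin p q) k = [:coeff p k, coeff q k:]"
  by (simp add: lin_def Tc_def coeff_lft)

lemma evT_lin: "eval_T t (lin p q) = p + smult t q"
  by (rule poly_eqI) (simp add: coeff_evT coeff_lin)

lemma degree_evT_le: "degree (eval_T t p) \<le> degree p"
  by (rule degree_le) (simp add: coeff_evT coeff_eq_0)

lemma eval_F:
  fixes h :: "'a::field poly poly \<times> 'a poly poly list"
  assumes "h \<in> F_dn d n"
  shows "eval_pair t h \<in> F_dn d n"
proof -
  obtain A B where h: "h = (A, B)" by force
  from assms h have dA: "degree A = n" and lA: "lead_coeff A = 1" and lB: "length B = d"
    and dB: "\<forall>b\<in>set B. b = 0 \<or> degree b < n" and gu: "gen_unit_ideal A B"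
    by (auto simp: F_dn_def)
  let ?A = "eval_T t A"
  have c1: "coeff ?A n = 1" using dA lA by (simp add: coeff_evT)
  have "degree ?A \<le> n" using dA by (metis degree_evT_le)
  moreover have "n \<le> degree ?A" using c1 by (intro le_degree) simp
  ultimately have dA': "degree ?A = n" by simp
  have dB': "\<forall>b\<in>set (map (eval_T t) B). b = 0 \<or> degree b < n"
  proof
    fix b assume "b \<in> set (map (eval_T t) B)"
    then obtain b0 where b0: "b0 \<in> set B" "b = eval_T t b0" by auto
    show "b = 0 \<or> degree b < n"
    proof (cases "b0 = 0")
      case True then show ?thesis using b0 by (simp add: eval_T_def)
    next
      case False then have "degree b0 < n" using dB b0 by auto
      then show ?thesis using b0 degree_evT_le[of t b0] by simp
    qed
  qed
  from gu obtain U V where UV: "length V = length B" "U * A + (\<Sum>i<length B. V ! i * B ! i) = 1"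
    unfolding gen_unit_ideal_def by blast
  have "eval_T t (U * A + (\<Sum>i<length B. V ! i * B ! i)) = 1" using UV by (simp add: evT_1)
  then have "eval_T t U * ?A + (\<Sum>i<length B. eval_T t (V ! i) * eval_T t (B ! i)) = 1"
    by (simp add: evT_add evT_mult evT_sum)
  then have "eval_T t U * ?A + (\<Sum>i<length (map (eval_T t) B). map (eval_T t) V ! i * map (eval_T t) B ! i) = 1"
    using UV(1) by simp
  then have "gen_unit_ideal ?A (map (eval_T t) B)"
    unfolding gen_unit_ideal_def using UV(1) by (metis length_map)
  then show ?thesis using dA' c1 lB dB' h
    by (simp add: F_dn_def eval_pair_def)
qed

definition small :: "nat \<Rightarrow> 'a::zero poly \<Rightarrow> bool" where
  "small n p \<longleftrightarrow> (\<forall>k\<ge>n. coeff p k = 0)"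

lemma small_iff: "small n p \<longleftrightarrow> p = 0 \<or> degree p < n"
  unfolding small_def
  by (metis coeff_0 coeff_eq_0 le_less_trans leading_coeff_0_iff not_le)

lemma small_add: "small n p \<Longrightarrow> small n q \<Longrightarrow> small n (p + q)"
  by (simp add: small_def)
lemma small_diff: "small n p \<Longrightarrow> small n (q::'a::ab_group_add poly) \<Longrightarrow> small n (p - q)"
  by (simp add: small_def)
lemma small_mult_const: "small n p \<Longrightarrow> small n (smult c p)"
  by (simp add: small_def)
lemma small_lft: "small n p \<Longrightarrow> small n (lft p)"
  by (simp add: small_def coeff_lft)
lemma small_lin: "small n p \<Longrightarrow> small n q \<Longrightarrow> small n (lin p q)"
  by (simp add: small_def coeff_lin)

lemma F_dnI:
  "degree A = n \<Longrightarrow> lead_coeff A = 1 \<Longrightarrow> length B = d \<Longrightarrow> (\<forall>b\<in>set B. small n b) \<Longrightarrow>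
   gen_unit_ideal A B \<Longrightarrow> (A, B) \<in> F_dn d n"
  by (simp add: F_dn_def small_iff)

lemma F_dnD:
  assumes "(A, B) \<in> F_dn d n"
  shows "degree A = n" "lead_coeff A = 1" "length B = d" "\<And>b. b \<in> set B \<Longrightarrow> small n b"
    "gen_unit_ideal A B"
  using assms by (auto simp: F_dn_def small_iff)

lemma lead_lft: "lead_coeff (lft A) = [:lead_coeff A:]"
  by (simp add: degree_lft coeff_lft)

lemma elem_step:
  fixes A :: "'a::field poly"
  assumes F: "(A,B) \<in> F_dn d n" and ij: "i<d" "j<d" "i\<noteq>j"
    and r: "r = C * B!j + D * A" and sr: "small n r"
  shows "naive_htpy d (n,(A,B)) (n,(A,B[i := B!i + r]))"
proof -
  note FD = F_dnD[OF F]
  define B' where "B' = (map lft B)[i := lin (B!i) r]"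
  define h where "h = (lft A, B')"
  from FD(5) obtain U V where UV: "length V = length B" "U * A + (\<Sum>l<length B. V ! l * B ! l) = 1"
    unfolding gen_unit_ideal_def by blast
  define V' where "V' = (map lft V)[j := lft (V!j) - Tc * lft (V!i) * lft C]"
  define U' where "U' = lft U - Tc * lft (V!i) * lft D"
  have pw: "V'!l * B'!l = lft (V!l * B!l) + (if l = i then lft(V!i) * (Tc * lft r) else 0)
      + (if l = j then - (Tc * lft (V!i) * lft C * lft (B!j)) else 0)" if "l < d" for l
    using that ij UV(1) FD(3)
    by (auto simp: V'_def B'_def lin_def lft_mult algebra_simps)
  have lB': "length B' = d" using FD(3) by (simp add: B'_def)
  have "(\<Sum>l<length B'. V'!l * B'!l) = (\<Sum>l<d. lft (V!l * B!l) + (if l = i then lft(V!i) * (Tc * lft r) else 0)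
      + (if l = j then - (Tc * lft (V!i) * lft C * lft (B!j)) else 0))"
    using pw lB' by (intro sum.cong) auto
  also have "\<dots> = (\<Sum>l<d. lft (V!l * B!l)) + lft(V!i) * (Tc * lft r)
      - Tc * lft (V!i) * lft C * lft (B!j)"
    using ij by (simp add: sum.distrib)
  also have "\<dots> = lft (\<Sum>l<d. V!l * B!l) + lft(V!i) * (Tc * lft r)
      - Tc * lft (V!i) * lft C * lft (B!j)" by (simp add: lft_sum)
  finally have S: "U' * lft A + (\<Sum>l<length B'. V'!l * B'!l) =
     lft (U * A + (\<Sum>l<d. V!l * B!l))"
    by (simp add: U'_def r lft_add lft_mult algebra_simps)
  have gu: "gen_unit_ideal (lft A) B'"
    unfolding gen_unit_ideal_def
    apply (rule exI[of _ U'], rule exI[of _ V'])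
    using S UV FD(3) by (simp add: V'_def B'_def lft_1)
  have sm: "\<forall>b\<in>set B'. small n b"
  proof
    fix b assume "b \<in> set B'"
    then have "b \<in> set (map lft B) \<or> b = lin (B!i) r"
      unfolding B'_def using set_update_subset_insert by fastforce
    then show "small n b" using FD(4) sr ij FD(3)
      by (auto intro: small_lft small_lin)
  qed
  have hF: "h \<in> F_dn d n" unfolding h_def
    by (rule F_dnI) (use FD gu sm in \<open>simp_all add: degree_lft coeff_lft one_pCons B'_def\<close>)
  have e0: "eval_pair 0 h = (A, B)"
    using ij FD(3) by (simp add: h_def eval_pair_def evT_lft B'_def map_update o_def evT_lin)
  have e1: "eval_pair 1 h = (A, B[i := B!i + r])"
    using ij FD(3) by (simp add: h_def eval_pair_def evT_lft B'_def map_update o_def evT_lin)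
  show ?thesis unfolding naive_htpy_def
    apply (rule exI[of _ n], rule exI[of _ h]) using hF e0 e1 by simp
qed

lemma A_step:
  fixes A :: "'a::field poly"
  assumes F: "(A,B) \<in> F_dn d n" and j: "j<d" "B!j = 1" and A': "degree A' = n" "lead_coeff A' = 1"
  shows "naive_htpy d (n,(A,B)) (n,(A',B))"
proof -
  note FD = F_dnD[OF F]
  define A2 where "A2 = lin A (A' - A)"
  define h where "h = (A2, map lft B)"
  have cA2: "coeff A2 k = [:coeff A k, coeff A' k - coeff A k:]" for k
    by (simp add: A2_def coeff_lin)
  have c1: "coeff A2 n = 1" using FD(1,2) A' by (simp add: cA2 one_pCons)
  have "degree A2 \<le> n"
    by (rule degree_le) (simp add: cA2 coeff_eq_0 FD(1) A')
  moreover have "n \<le> degree A2" using c1 by (intro le_degree) simp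
  ultimately have dA2: "degree A2 = n" by simp
  define V where "V = (replicate d (0::'a poly poly))[j := 1]"
  have "(\<Sum>l<length (map lft B). V!l * map lft B ! l) = (\<Sum>l<d. if l = j then lft (B!j) else 0)"
    using FD(3) j by (intro sum.cong) (auto simp: V_def)
  also have "\<dots> = 1" using j by (simp add: lft_1)
  finally have gu: "gen_unit_ideal A2 (map lft B)"
    unfolding gen_unit_ideal_def using FD(3)
    by (intro exI[of _ 0] exI[of _ V]) (simp add: V_def)
  have hF: "h \<in> F_dn d n" unfolding h_def
    by (rule F_dnI) (use FD gu c1 dA2 in \<open>auto intro: small_lft\<close>)
  have e0: "eval_pair 0 h = (A, B)"
    by (simp add: h_def A2_def eval_pair_def evT_lft o_def evT_lin)
  have e1: "eval_pair 1 h = (A', B)"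
    by (simp add: h_def A2_def eval_pair_def evT_lft o_def evT_lin)
  show ?thesis unfolding naive_htpy_def
    apply (rule exI[of _ n], rule exI[of _ h]) using hF e0 e1 by simp
qed

abbreviation conn :: "nat \<Rightarrow> nat \<times> ('a::field poly \<times> 'a poly list) \<Rightarrow> nat \<times> ('a poly \<times> 'a poly list) \<Rightarrow> bool" where
  "conn d \<equiv> equivclp (naive_htpy d)"

lemma htpy_F: "naive_htpy d x y \<Longrightarrow> snd y \<in> F_dn d (fst y) \<and> fst x = fst y"
proof -
  assume "naive_htpy d x y"
  then obtain n h where "h \<in> F_dn d n" "x = (n, eval_pair 0 h)" "y = (n, eval_pair 1 h)"
    unfolding naive_htpy_def by blast
  then show ?thesis using eval_F[of h d n 1] by simp
qed

lemma elem_conn: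
  fixes A :: "'a::field poly"
  assumes F: "(A,B) \<in> F_dn d n" and ij: "i<d" "j<d" "i\<noteq>j"
    and r: "r = C * B!j + D * A" and sr: "small n r"
  shows "conn d (n,(A,B)) (n,(A,B[i := B!i + r])) \<and> (A,B[i := B!i + r]) \<in> F_dn d n"
proof -
  note H = elem_step[OF assms]
  show ?thesis using eqc_step[of "naive_htpy d", OF H] htpy_F[OF H] by simp
qed

lemma small_nth: "(A,B) \<in> F_dn d n \<Longrightarrow> l < d \<Longrightarrow> small n (B!l)"
  using F_dnD(3,4) by (metis nth_mem)

lemma swap_conn:
  fixes A :: "'a::field poly"
  assumes F: "(A,B) \<in> F_dn d n" and ij: "i<d" "j<d" "i\<noteq>j" and z: "B!i = 0"
  shows "conn d (n,(A,B)) (n,(A,B[i := B!j, j := 0])) \<and> (A,B[i := B!j, j := 0]) \<in> F_dn d n"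
proof -
  have lB: "length B = d" using F_dnD(3)[OF F] .
  have s1: "conn d (n,(A,B)) (n,(A,B[i := B!i + B!j])) \<and> (A,B[i := B!i + B!j]) \<in> F_dn d n"
    by (rule elem_conn[OF F ij, of _ 1 0]) (simp_all add: small_nth[OF F ij(2)])
  define B1 where "B1 = B[i := B!j]"
  have s1': "conn d (n,(A,B)) (n,(A,B1)) \<and> (A,B1) \<in> F_dn d n" using s1 z by (simp add: B1_def)
  have b1: "B1!i = B!j" "B1!j = B!j" using ij lB by (auto simp: B1_def)
  have s2: "conn d (n,(A,B1)) (n,(A,B1[j := B1!j + - (B!j)])) \<and> (A,B1[j := B1!j + - (B!j)]) \<in> F_dn d n"
    by (rule elem_conn[OF conjunct2[OF s1'] ij(2,1) ij(3)[symmetric], of _ "-1" 0])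
       (use b1 small_nth[OF F ij(2)] in \<open>simp_all add: small_def\<close>)
  have "B1[j := B1!j + - (B!j)] = B[i := B!j, j := 0]" using b1 by (simp add: B1_def)
  then show ?thesis using s2 eqc_trans[OF conjunct1[OF s1'] conjunct1[OF s2]] by simp
qed

lemma euclid_conn:
  fixes A :: "'a::field poly"
  assumes "(A,B) \<in> F_dn d n" "i<d" "j<d" "i\<noteq>j"
  shows "\<exists>g. conn d (n,(A,B)) (n,(A,B[i := g, j := 0])) \<and> (A,B[i := g, j := 0]) \<in> F_dn d n"
  using assms
proof (induction "if B!j = 0 then 0 else Suc (degree (B!j))" arbitrary: B i j rule: less_induct)
  case less
  have lB: "length B = d" using F_dnD(3)[OF less.prems(1)] .
  show ?case
  proof (cases "B!j = 0")
    case True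
    have "B[j := 0] = B" using True list_update_id[of B j] by simp
    then have "B[i := B!i, j := 0] = B" by simp
    then show ?thesis using less.prems(1) eqc_refl[of "naive_htpy d" "(n,(A,B))"]
      by (intro exI[of _ "B!i"]) simp
  next
    case False
    define x where "x = B!i"
    define y where "y = B!j"
    have xy: "x + (- (x div y)) * B!j + 0 * A = x mod y"
    proof -
      have "x - x div y * y = x mod y" by (rule minus_div_mult_eq_mod)
      then show ?thesis by (simp add: y_def)
    qed
    have sx: "small n x" "small n y" using small_nth[OF less.prems(1)] less.prems by (auto simp: x_def y_def)
    have sm: "small n (x mod y)"
      using degree_mod_less[of y x] False sx(2) by (auto simp: small_iff y_def)
    have sr: "small n ((- (x div y)) * B!j + 0 * A)"
    proof -
      have "(- (x div y)) * B!j + 0 * A = x mod y - x" using xy by (simp add: algebra_simps)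
      then show ?thesis using sm sx small_diff by metis
    qed
    have s1: "conn d (n,(A,B)) (n,(A,B[i := B!i + ((- (x div y)) * B!j + 0 * A)])) \<and>
        (A,B[i := B!i + ((- (x div y)) * B!j + 0 * A)]) \<in> F_dn d n"
      by (rule elem_conn[OF less.prems, of _ "- (x div y)" 0]) (use sr in simp_all)
    define B1 where "B1 = B[i := x mod y]"
    have s1': "conn d (n,(A,B)) (n,(A,B1)) \<and> (A,B1) \<in> F_dn d n"
      using s1 xy by (simp add: B1_def x_def add.assoc)
    have b1: "B1!i = x mod y" "B1!j = B!j" using less.prems lB by (auto simp: B1_def)
    have lt: "(if B1!i = 0 then 0 else Suc (degree (B1!i))) < (if B!j = 0 then 0 else Suc (degree (B!j)))"
      using b1 False degree_mod_less'[of y x] by (auto simp: y_def)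
    obtain g' where g': "conn d (n,(A,B1)) (n,(A,B1[j := g', i := 0]))" "(A,B1[j := g', i := 0]) \<in> F_dn d n"
      using less.hyps[OF lt conjunct2[OF s1'] less.prems(3,2) less.prems(4)[symmetric]] by blast
    define B2 where "B2 = B1[j := g', i := 0]"
    have b2: "B2!i = 0" "B2!j = g'" using less.prems lB by (auto simp: B2_def B1_def)
    have s3: "conn d (n,(A,B2)) (n,(A,B2[i := B2!j, j := 0])) \<and> (A,B2[i := B2!j, j := 0]) \<in> F_dn d n"
      by (rule swap_conn) (use g' b2 less.prems in \<open>simp_all add: B2_def\<close>)
    have "B2[i := B2!j, j := 0] = B[i := g', j := 0]"
      using b2 less.prems lB by (intro nth_equalityI) (auto simp: B2_def B1_def nth_list_update)
    moreover have "conn d (n,(A,B)) (n,(A,B2[i := B2!j, j := 0]))"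
      using eqc_trans[OF eqc_trans[OF conjunct1[OF s1'] g'(1)[folded B2_def]] conjunct1[OF s3]] .
    ultimately show ?thesis using s3 by (intro exI[of _ g']) simp
  qed
qed

lemma clear_conn:
  fixes A :: "'a::field poly"
  assumes F: "(A,B) \<in> F_dn d n" and k: "k < d"
  shows "\<exists>B'. conn d (n,(A,B)) (n,(A,B')) \<and> (A,B') \<in> F_dn d n \<and> (\<forall>l. 1 \<le> l \<and> l \<le> k \<longrightarrow> B'!l = 0)"
  using k
proof (induction k)
  case 0 then show ?case using F eqc_refl[of "naive_htpy d" "(n,(A,B))"] by (intro exI[of _ B]) auto
next
  case (Suc k)
  then obtain B' where B': "conn d (n,(A,B)) (n,(A,B'))" "(A,B') \<in> F_dn d n"
    "\<forall>l. 1 \<le> l \<and> l \<le> k \<longrightarrow> B'!l = 0" by auto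
  obtain g where g: "conn d (n,(A,B')) (n,(A,B'[0 := g, Suc k := 0]))" "(A,B'[0 := g, Suc k := 0]) \<in> F_dn d n"
    using euclid_conn[OF B'(2), of 0 "Suc k"] Suc.prems by auto
  have lB: "length B' = d" using F_dnD(3)[OF B'(2)] .
  have "\<forall>l. 1 \<le> l \<and> l \<le> Suc k \<longrightarrow> B'[0 := g, Suc k := 0]!l = 0"
    using B'(3) lB Suc.prems by (auto simp: nth_list_update le_Suc_eq)
  then show ?case using g eqc_trans[OF B'(1) g(1)] by blast
qed

definition canon :: "nat \<Rightarrow> nat \<Rightarrow> nat \<times> ('a::field poly \<times> 'a poly list)" where
  "canon d n = (n, if n = 0 then (1, replicate d 0) else (monom 1 n, (replicate d 0)[1 := 1]))"

lemma canon_conn_pos: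
  fixes A :: "'a::field poly"
  assumes F: "(A,B) \<in> F_dn d n" and d: "2 \<le> d" and n: "1 \<le> n"
  shows "conn d (n,(A,B)) (canon d n)"
proof -
  obtain B' where B': "conn d (n,(A,B)) (n,(A,B'))" "(A,B') \<in> F_dn d n"
    "\<forall>l. 1 \<le> l \<and> l \<le> d - 1 \<longrightarrow> B'!l = 0"
    using clear_conn[OF F, of "d - 1"] d by auto
  have lB: "length B' = d" using F_dnD(3)[OF B'(2)] .
  from F_dnD(5)[OF B'(2)] obtain U V where UV: "length V = length B'"
    "U * A + (\<Sum>l<length B'. V ! l * B' ! l) = 1" unfolding gen_unit_ideal_def by blast
  have "(\<Sum>l<length B'. V ! l * B' ! l) = (\<Sum>l<d. if l = 0 then V!0 * B'!0 else 0)"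
    using lB B'(3) by (intro sum.cong) auto
  also have "\<dots> = V!0 * B'!0" using d by simp
  finally have uv: "V!0 * B'!0 + U * A = 1" using UV(2) by (simp add: add.commute)
  have s1n: "small n (1::'a poly)" using n by (simp add: small_iff)
  have s1: "conn d (n,(A,B')) (n,(A,B'[1 := 1])) \<and> (A,B'[1 := 1]) \<in> F_dn d n"
    using elem_conn[OF B'(2), of 1 0 1 "V!0" U] d uv s1n B'(3) by simp
  define B2 where "B2 = B'[1 := 1]"
  have b2: "B2!1 = 1" "B2!0 = B'!0" using lB d by (auto simp: B2_def)
  have s0: "small n (- (B'!0))" using small_nth[OF B'(2), of 0] d by (simp add: small_def)
  have s2: "conn d (n,(A,B2)) (n,(A,B2[0 := B2!0 + - (B'!0)])) \<and> (A,B2[0 := B2!0 + - (B'!0)]) \<in> F_dn d n"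
    using elem_conn[of A B2 d n 0 1 "- (B'!0)" "- (B'!0)" 0] s1 d b2 s0 by (simp add: B2_def)
  have eq: "B2[0 := B2!0 + - (B'!0)] = (replicate d 0)[1 := 1]"
    using lB d B'(3) b2 by (intro nth_equalityI) (auto simp: B2_def nth_list_update)
  have dm: "degree (monom (1::'a) n) = n" "lead_coeff (monom (1::'a) n) = 1"
    by (simp_all add: degree_monom_eq)
  have s3: "naive_htpy d (n,(A,(replicate d 0)[1 := 1])) (n,(monom 1 n,(replicate d 0)[1 := 1]))"
  proof -
    have Fc: "(A, (replicate d 0)[1 := 1]) \<in> F_dn d n" using s2 eq by simp
    have "1 < d" "(replicate d (0::'a poly))[1 := 1] ! 1 = 1" using d by auto
    from A_step[OF Fc this dm] show ?thesis .
  qed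
  have "conn d (n,(A,B)) (n,(A,(replicate d 0)[1 := 1]))"
  proof -
    have "conn d (n,(A,B)) (n,(A,B2))" using eqc_trans[OF B'(1) conjunct1[OF s1]] by (simp add: B2_def)
    from eqc_trans[OF this conjunct1[OF s2]] show ?thesis using eq by simp
  qed
  then show ?thesis using eqc_trans[OF _ eqc_step[of "naive_htpy d", OF s3]] n by (simp add: canon_def)
qed

lemma F_zero:
  fixes A :: "'a::field poly"
  assumes F: "(A,B) \<in> F_dn d 0"
  shows "A = 1 \<and> B = replicate d 0"
proof
  note FD = F_dnD[OF F]
  show "A = 1"
  proof (rule poly_eqI)
    fix k show "coeff A k = coeff 1 k"
      using FD(1,2) coeff_eq_0[of A k] by (cases k) auto
  qed
  show "B = replicate d 0"
  proof (rule nth_equalityI)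
    show "length B = length (replicate d 0)" using FD(3) by simp
    fix l assume "l < length B"
    then have "small 0 (B!l)" using FD(4) nth_mem by blast
    then show "B!l = replicate d 0 ! l" using \<open>l < length B\<close> FD(3)
      by (simp add: small_iff)
  qed
qed

lemma canon_conn:
  fixes x :: "nat \<times> ('a::field poly \<times> 'a poly list)"
  assumes "x \<in> pointed_morphisms d" "2 \<le> d"
  shows "conn d x (canon d (fst x))"
proof -
  obtain n A B where x: "x = (n, (A, B))" by (metis prod.exhaust)
  have F: "(A,B) \<in> F_dn d n" using assms(1) x by (simp add: pointed_morphisms_def)
  show ?thesis
  proof (cases "n = 0")
    case True
    then show ?thesis using F_zero[of A B d] F x eqc_refl by (simp add: canon_def)
  next
    case False
    then show ?thesis using canon_conn_pos[OF F assms(2)] x by simp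
  qed
qed

lemma canon_in:
  assumes "2 \<le> d"
  shows "(canon d n :: nat \<times> ('a::field poly \<times> 'a poly list)) \<in> pointed_morphisms d"
proof (cases "n = 0")
  case True
  have "gen_unit_ideal (1::'a poly) (replicate d 0)"
    unfolding gen_unit_ideal_def by (intro exI[of _ 1] exI[of _ "replicate d 0"]) simp
  then show ?thesis using True
    by (simp add: canon_def pointed_morphisms_def F_dn_def)
next
  case False
  define B where "B = (replicate d (0::'a poly))[1 := 1]"
  have "(\<Sum>l<length B. B ! l * B ! l) = (\<Sum>l<d. if l = 1 then 1 else 0)"
    using assms by (intro sum.cong) (auto simp: B_def nth_list_update)
  also have "\<dots> = 1" using assms by simp
  finally have gu: "gen_unit_ideal (monom 1 n) B"
    unfolding gen_unit_ideal_def by (intro exI[of _ 0] exI[of _ B]) simp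
  have "\<forall>b\<in>set B. b = 0 \<or> degree b < n"
    using False set_update_subset_insert[of "replicate d 0" 1 1] by (auto simp: B_def)
  then show ?thesis using False gu
    by (simp add: canon_def pointed_morphisms_def F_dn_def degree_monom_eq B_def)
qed

lemma fst_conn: "conn d x y \<Longrightarrow> fst x = fst y"
proof (induction rule: equivclp_induct)
  case base then show ?case by simp
next
  case (step y z) then show ?case using htpy_F[of d y z] htpy_F[of d z y] by auto
qed

lemma cls_eq:
  "x \<in> pointed_morphisms d \<Longrightarrow> naive_rel d `` {x} = {y \<in> pointed_morphisms d. conn d x y}"
  by (auto simp: naive_rel_def)

lemma deg_cls:
  fixes x :: "nat \<times> ('a::field poly \<times> 'a poly list)"
  assumes "x \<in> pointed_morphisms d"
  shows "deg_class (naive_rel d `` {x}) = fst x"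
proof -
  have "fst ` {y \<in> pointed_morphisms d. conn d x y} = {fst x}"
  proof (rule equalityI)
    show "fst ` {y \<in> pointed_morphisms d. conn d x y} \<subseteq> {fst x}"
      using fst_conn[of d x] by auto
    show "{fst x} \<subseteq> fst ` {y \<in> pointed_morphisms d. conn d x y}"
      using assms eqc_refl[of "naive_htpy d" x] by auto
  qed
  then show ?thesis using cls_eq[OF assms] by (simp add: deg_class_def)
qed

theorem theorem4p12:
  fixes d :: nat
  assumes "2 \<le> d"
  shows "bij_betw (deg_class :: (nat \<times> ('a::field poly \<times> 'a poly list)) set \<Rightarrow> nat)
           (naive_classes d) UNIV"
  unfolding bij_betw_def
proof
  show "inj_on (deg_class :: (nat \<times> ('a::field poly \<times> 'a poly list)) set \<Rightarrow> nat) (naive_classes d)"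
  proof (rule inj_onI)
    fix C1 C2 :: "(nat \<times> ('a::field poly \<times> 'a poly list)) set"
    assume C1: "C1 \<in> naive_classes d" and C2: "C2 \<in> naive_classes d" and eq: "deg_class C1 = deg_class C2"
    obtain x where x: "x \<in> pointed_morphisms d" "C1 = naive_rel d `` {x}"
      using C1 unfolding naive_classes_def by (auto elim: quotientE)
    obtain y where y: "y \<in> pointed_morphisms d" "C2 = naive_rel d `` {y}"
      using C2 unfolding naive_classes_def by (auto elim: quotientE)
    have f: "fst x = fst y" using eq deg_cls[OF x(1)] deg_cls[OF y(1)] x y by simp
    have cxy: "conn d x y"
    proof -
      have "conn d x (canon d (fst y))" using canon_conn[OF x(1) assms] f by simp
      from eqc_trans[OF this equivclp_sym[OF canon_conn[OF y(1) assms]]] show ?thesis .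
    qed
    have "{z \<in> pointed_morphisms d. conn d x z} = {z \<in> pointed_morphisms d. conn d y z}"
    proof (rule Collect_cong)
      fix z show "(z \<in> pointed_morphisms d \<and> conn d x z) = (z \<in> pointed_morphisms d \<and> conn d y z)"
        using eqc_trans[OF cxy, of z] eqc_trans[OF equivclp_sym[OF cxy], of z] by blast
    qed
    then show "C1 = C2" using x(2) y(2) cls_eq[OF x(1)] cls_eq[OF y(1)] by simp
  qed
next
  show "(deg_class :: (nat \<times> ('a::field poly \<times> 'a poly list)) set \<Rightarrow> nat) ` naive_classes d = UNIV"
  proof -
    have "n \<in> (deg_class :: (nat \<times> ('a::field poly \<times> 'a poly list)) set \<Rightarrow> nat) ` naive_classes d" for n
    proof -
      define c where "c = (canon d n :: nat \<times> ('a::field poly \<times> 'a poly list))"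
      have cin: "c \<in> pointed_morphisms d" unfolding c_def by (rule canon_in[OF assms])
      have "naive_rel d `` {c} \<in> naive_classes d" unfolding naive_classes_def by (rule quotientI[OF cin])
      moreover have "deg_class (naive_rel d `` {c}) = n" using deg_cls[OF cin] by (simp add: c_def canon_def)
      ultimately show ?thesis by (metis rev_image_eqI)
    qed
    then show ?thesis by auto
  qed
qed

end
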